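(* Let $S$ be a monotonically decreasing indexical set of agents. Let $P$ be a decision protocol that implements the knowledge-based program $\mathbf{P}(\Phi)$ with respect to an information exchange $\mathcal{E}$ and failure model $\mathcal{F}$, where $\Phi_{i,v}=B^S_i\,CB_S\,\exists v$. Then SBA($S$) is valid in $\mathcal{I}_{P,\mathcal{E},\mathcal{F}}$.
   Context: Agents $\mathrm{Agt}=\{1,\dots,n\}$; $V$ is a totally ordered set of decision values; actions $A_i=\{\mathtt{noop}\}\cup\{\mathtt{decide}_i(v):v\in V\}$. An information exchange $\mathcal{E}$ gives each agent $i$ a tuple $(L_i,I_i,M_i,\mu_i,\delta_i)$: local states $L_i$ of form $\langle\mathit{init}_i,\mathit{time}_i,\dots\rangle$ ($\mathit{init}_i\in V$ the initial preference), initial states $I_i$, messages $M_i\ni\bot$, $\mu_i:L_i\times A_i\to(\mathrm{Agt}\to M_i)$, $\delta_i:L_i\times A_i\times\prod_jM_j\to L_i$ (preserving $\mathit{init}_i$, incrementing $\mathit{time}_i$). A decision protocol is $P=(P_i:L_i\to A_i)_i$. A failure model $\mathcal{F}=(L^*_e,I_e,\delta_e,\mathit{Adv})$ has environment states, nonempty initial ones, update $\delta_e:L^*_e\times\prod_iA_i\to L^*_e$, and a nonempty set of adversaries $(\Delta^t,\Delta^r,\Delta^s)$ with $\Delta^t,\Delta^r:\mathbb{N}\times\mathrm{Agt}\times\mathrm{Agt}\times\bigcup_iM_i\to\bigcup_iM_i$, $\Delta^s_i:\mathbb{N}\times L_i\to L_i$ (not changing $\mathit{time}_i$). Runs $r$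 of $\mathcal{I}_{P,\mathcal{E},\mathcal{F}}$: $r(0)=((s_e,\alpha),s_1,\dots,s_n)$ with $s_e\in I_e,\alpha\in\mathit{Adv},s_i\in I_i$; from $r(k)=((s_e,\alpha),s_1,\dots,s_n)$, $r(k+1)=((\delta_e(s_e,(a_1,\dots,a_n)),\alpha),s'_1,\dots,s'_n)$ where $a_i=P_i(s_i)$ (action of $i$ at time $k$), $m_{i,j}=\mu_i(s_i,a_i)(j)$, $m'_{i,j}=\Delta^r(k,i,j,\Delta^t(k,i,j,m_{i,j}))$, $s^*_j=\delta_j(s_j,a_j,(m'_{1,j},\dots,m'_{n,j}))$, $s'_j=\Delta^s_j(k,s^*_j)$. $(r,m)\sim_i(r',m')$ iff $r_i(m)=r'_i(m')$; $K_i\phi$ holds iff $\phi$ holds at all $\sim_i$-related points. An indexical set $S$ assigns $S(r,m)\subseteq\mathrm{Agt}$ to each point; it is monotonically decreasing if $S(r,m)\subseteq S(r,m')$ whenever $m>m'$. $B^S_i\phi:=K_i(i\in S\Rightarrow\phi)$; $E^B_S\phi:=\bigwedge_{i\in S}B^S_i\phi$; $CB_S\phi:=\bigwedge_{k\ge1}(E^B_S)^k\phi$. $\exists v$ holds at $(r,m)$ iff some agent's initial preference in $r$ is $v$. The knowledge-based program $\mathbf{P}(\Phi)$ (for formulas $\Phi_{i,v}$) has agent $i$ do $\mathtt{noop}$ until some $v\in V$ satisfies $\Phi_{i,v}$, then perform $\mathtt{decide}_i(v)$ for the least such $v$, then $\mathtt{noop}$ forever. $P$ implements $\mathbf{P}(\Phi)$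 w.r.t. $\mathcal{E},\mathcal{F}$ if at every point $(r,m)$ of $\mathcal{I}_{P,\mathcal{E},\mathcal{F}}$ and every agent $i$, $P_i(r_i(m))$ is the action this program prescribes for $i$ at $(r,m)$, with $\Phi_{i,v}$ evaluated in $\mathcal{I}_{P,\mathcal{E},\mathcal{F}}$ (i.e. $\mathtt{noop}$ if $i$ performed a $\mathtt{decide}$ action at an earlier time in $r$; otherwise $\mathtt{decide}_i(v)$ for the least $v$ with $\Phi_{i,v}$ true at $(r,m)$ if one exists; otherwise $\mathtt{noop}$). SBA($S$) valid means in every run $r$: each agent performs a $\mathtt{decide}$ action at most once; if $i\in S(r,m)$ performs $\mathtt{decide}_i(v)$ at time $m$ then every $j\in S(r,m)$ performs $\mathtt{decide}_j(v)$ at time $m$; and if $i\in S(r,m)$ performs $\mathtt{decide}_i(v)$ at time $m$ then some agent has initial preference $v$. *)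

theory Defs
  imports Main
begin

text \<open>The action set A_i = {noop} + {decide_i(v) : v in V}; the agent index of a
decide action is implicit (it is the agent performing it).\<close>
datatype 'v act = Noop | Decide 'v

text \<open>All agents' local states live in one HOL type 'l, with L_i carved out as a set;
likewise all messages live in one type 'm (the union of the M_i).\<close>
record ('agt, 'l, 'm, 'v) info_exchange =
  Ls    :: "'agt \<Rightarrow> 'l set"
  Is    :: "'agt \<Rightarrow> 'l set"
  Ms    :: "'agt \<Rightarrow> 'm set"
  mu    :: "'agt \<Rightarrow> 'l \<Rightarrow> 'v act \<Rightarrow> 'agt \<Rightarrow> 'm"
  delta :: "'agt \<Rightarrow> 'l \<Rightarrow> 'v act \<Rightarrow> ('agt \<Rightarrow> 'm) \<Rightarrow> 'l"
  init  :: "'agt \<Rightarrow> 'l \<Rightarrow> 'v"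
  time  :: "'agt \<Rightarrow> 'l \<Rightarrow> nat"

definition is_info_exchange :: "'m \<Rightarrow> ('agt, 'l, 'm, 'v) info_exchange \<Rightarrow> bool" where
  "is_info_exchange botm E \<longleftrightarrow>
     (\<forall>i. Is E i \<subseteq> Ls E i) \<and>
     (\<forall>i. botm \<in> Ms E i) \<and>
     (\<forall>i s a j. s \<in> Ls E i \<longrightarrow> mu E i s a j \<in> Ms E i) \<and>
     (\<forall>i s a ms. s \<in> Ls E i \<longrightarrow> delta E i s a ms \<in> Ls E i) \<and>
     (\<forall>i s a ms. s \<in> Ls E i \<longrightarrow> init E i (delta E i s a ms) = init E i s) \<and>
     (\<forall>i s a ms. s \<in> Ls E i \<longrightarrow> time E i (delta E i s a ms) = Suc (time E i s))"

type_synonym ('agt, 'l, 'm) adversary =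
  "(nat \<Rightarrow> 'agt \<Rightarrow> 'agt \<Rightarrow> 'm \<Rightarrow> 'm) \<times> (nat \<Rightarrow> 'agt \<Rightarrow> 'agt \<Rightarrow> 'm \<Rightarrow> 'm)
   \<times> ('agt \<Rightarrow> nat \<Rightarrow> 'l \<Rightarrow> 'l)"

record ('agt, 'e, 'l, 'm, 'v) failure_model =
  Le     :: "'e set"
  Ie     :: "'e set"
  deltae :: "'e \<Rightarrow> ('agt \<Rightarrow> 'v act) \<Rightarrow> 'e"
  Adv    :: "('agt, 'l, 'm) adversary set"

definition is_failure_model ::
  "('agt, 'l, 'm, 'v) info_exchange \<Rightarrow> ('agt, 'e, 'l, 'm, 'v) failure_model \<Rightarrow> bool" where
  "is_failure_model E F \<longleftrightarrow>
     Ie F \<noteq> {} \<and> Ie F \<subseteq> Le F \<and>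
     (\<forall>s acts. s \<in> Le F \<longrightarrow> deltae F s acts \<in> Le F) \<and>
     Adv F \<noteq> {} \<and>
     (\<forall>(dt, dr, ds) \<in> Adv F. \<forall>i k s. s \<in> Ls E i \<longrightarrow>
         ds i k s \<in> Ls E i \<and> time E i (ds i k s) = time E i s)"

text \<open>A run r gives the environment state at each time, the (fixed) adversary
component of the environment state, and each agent's local state at each time.\<close>
type_synonym ('agt, 'e, 'l, 'm) run =
  "(nat \<Rightarrow> 'e) \<times> ('agt, 'l, 'm) adversary \<times> (nat \<Rightarrow> 'agt \<Rightarrow> 'l)"

definition renv :: "('agt, 'e, 'l, 'm) run \<Rightarrow> nat \<Rightarrow> 'e" where
  "renv r = fst r"
definition radv :: "('agt, 'e, 'l, 'm) run \<Rightarrow> ('agt, 'l, 'm) adversary" where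
  "radv r = fst (snd r)"
definition rloc :: "('agt, 'e, 'l, 'm) run \<Rightarrow> nat \<Rightarrow> 'agt \<Rightarrow> 'l" where
  "rloc r = snd (snd r)"

type_synonym ('agt, 'l, 'v) protocol = "'agt \<Rightarrow> 'l \<Rightarrow> 'v act"

definition runs ::
  "('agt, 'l, 'v) protocol \<Rightarrow> ('agt, 'l, 'm, 'v) info_exchange \<Rightarrow>
   ('agt, 'e, 'l, 'm, 'v) failure_model \<Rightarrow> ('agt, 'e, 'l, 'm) run set" where
  "runs P E F = {r.
     renv r 0 \<in> Ie F \<and> radv r \<in> Adv F \<and> (\<forall>i. rloc r 0 i \<in> Is E i) \<and>
     (\<forall>k. let (dt, dr, ds) = radv r;
              a = (\<lambda>i. P i (rloc r k i));
              msg = (\<lambda>i j. mu E i (rloc r k i) (a i) j);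
              msg' = (\<lambda>i j. dr k i j (dt k i j (msg i j)))
          in renv r (Suc k) = deltae F (renv r k) a \<and>
             (\<forall>j. rloc r (Suc k) j =
                    ds j k (delta E j (rloc r k j) (a j) (\<lambda>i. msg' i j))))}"

type_synonym ('agt, 'e, 'l, 'm) fml = "('agt, 'e, 'l, 'm) run \<Rightarrow> nat \<Rightarrow> bool"

type_synonym ('agt, 'e, 'l, 'm) indexical = "('agt, 'e, 'l, 'm) run \<Rightarrow> nat \<Rightarrow> 'agt set"

definition Kn :: "('agt, 'e, 'l, 'm) run set \<Rightarrow> 'agt \<Rightarrow> ('agt, 'e, 'l, 'm) fml \<Rightarrow> ('agt, 'e, 'l, 'm) fml" where
  "Kn R i \<phi> = (\<lambda>r m. \<forall>r' \<in> R. \<forall>m'. rloc r' m' i = rloc r m i \<longrightarrow> \<phi> r' m')"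

definition Bel :: "('agt, 'e, 'l, 'm) run set \<Rightarrow> ('agt, 'e, 'l, 'm) indexical \<Rightarrow> 'agt \<Rightarrow>
    ('agt, 'e, 'l, 'm) fml \<Rightarrow> ('agt, 'e, 'l, 'm) fml" where
  "Bel R S i \<phi> = Kn R i (\<lambda>r m. i \<in> S r m \<longrightarrow> \<phi> r m)"

definition EB :: "('agt, 'e, 'l, 'm) run set \<Rightarrow> ('agt, 'e, 'l, 'm) indexical \<Rightarrow>
    ('agt, 'e, 'l, 'm) fml \<Rightarrow> ('agt, 'e, 'l, 'm) fml" where
  "EB R S \<phi> = (\<lambda>r m. \<forall>i \<in> S r m. Bel R S i \<phi> r m)"

definition CB :: "('agt, 'e, 'l, 'm) run set \<Rightarrow> ('agt, 'e, 'l, 'm) indexical \<Rightarrow>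
    ('agt, 'e, 'l, 'm) fml \<Rightarrow> ('agt, 'e, 'l, 'm) fml" where
  "CB R S \<phi> = (\<lambda>r m. \<forall>k \<ge> 1. ((EB R S) ^^ k) \<phi> r m)"

definition ex_val :: "('agt, 'l, 'm, 'v) info_exchange \<Rightarrow> 'v \<Rightarrow> ('agt, 'e, 'l, 'm) fml" where
  "ex_val E v = (\<lambda>r m. \<exists>i. init E i (rloc r 0 i) = v)"

definition mono_decreasing :: "('agt, 'e, 'l, 'm) run set \<Rightarrow> ('agt, 'e, 'l, 'm) indexical \<Rightarrow> bool" where
  "mono_decreasing R S \<longleftrightarrow> (\<forall>r \<in> R. \<forall>m m'. m > m' \<longrightarrow> S r m \<subseteq> S r m')"

text \<open>Action prescribed by P(Phi) for agent i at point (r,m), given the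
protocol actually run (to know whether i decided earlier).\<close>
definition kbp_action :: "('agt, 'l, 'v) protocol \<Rightarrow> ('agt \<Rightarrow> 'v \<Rightarrow> ('agt, 'e, 'l, 'm) fml) \<Rightarrow>
    'agt \<Rightarrow> ('agt, 'e, 'l, 'm) run \<Rightarrow> nat \<Rightarrow> ('v::linorder) act" where
  "kbp_action P \<Phi> i r m =
     (if \<exists>m' < m. \<exists>v. P i (rloc r m' i) = Decide v then Noop
      else if \<exists>v. \<Phi> i v r m \<and> (\<forall>w. \<Phi> i w r m \<longrightarrow> v \<le> w)
        then Decide (LEAST v. \<Phi> i v r m)
        else Noop)"

definition implements ::
  "('agt, 'l, 'v::linorder) protocol \<Rightarrow> ('agt \<Rightarrow> 'v \<Rightarrow> ('agt, 'e, 'l, 'm) fml) \<Rightarrow>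
   ('agt, 'l, 'm, 'v) info_exchange \<Rightarrow> ('agt, 'e, 'l, 'm, 'v) failure_model \<Rightarrow> bool" where
  "implements P \<Phi> E F \<longleftrightarrow>
     (\<forall>r \<in> runs P E F. \<forall>m i. P i (rloc r m i) = kbp_action P \<Phi> i r m)"

definition SBA_valid ::
  "('agt, 'l, 'v) protocol \<Rightarrow> ('agt, 'l, 'm, 'v) info_exchange \<Rightarrow>
   ('agt, 'e, 'l, 'm, 'v) failure_model \<Rightarrow> ('agt, 'e, 'l, 'm) indexical \<Rightarrow> bool" where
  "SBA_valid P E F S \<longleftrightarrow>
     (\<forall>r \<in> runs P E F.
        (\<forall>i m m' v v'. P i (rloc r m i) = Decide v \<and> P i (rloc r m' i) = Decide v' \<longrightarrow> m = m') \<and>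
        (\<forall>i j m v. i \<in> S r m \<and> j \<in> S r m \<and> P i (rloc r m i) = Decide v \<longrightarrow>
                    P j (rloc r m j) = Decide v) \<and>
        (\<forall>i m v. i \<in> S r m \<and> P i (rloc r m i) = Decide v \<longrightarrow> ex_val E v r m))"

end

theory Submission
  imports Defs
begin

lemma CB_EB:
  assumes "CB R S \<phi> r m" "l \<in> S r m"
  shows "Bel R S l (CB R S \<phi>) r m"
  unfolding Bel_def Kn_def CB_def
proof (intro ballI allI impI)
  fix r' m' and k :: nat
  assume h: "rloc r' m' l = rloc r m l" "l \<in> S r' m'" "1 \<le> k" and r': "r' \<in> R"
  have "(EB R S ^^ Suc k) \<phi> r m" 
  proof -
    have a: "\<forall>k\<ge>1. (EB R S ^^ k) \<phi> r m" using assms(1) unfolding CB_def by simp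
    have "(1::nat) \<le> Suc k" by simp
    with a show ?thesis by blast
  qed
  then have "EB R S ((EB R S ^^ k) \<phi>) r m" by simp
  then have "Bel R S l ((EB R S ^^ k) \<phi>) r m" using assms(2) unfolding EB_def by blast
  then show "(EB R S ^^ k) \<phi> r' m'" using h r' unfolding Bel_def Kn_def by auto
qed

lemma Bel_self:
  assumes "Bel R S i \<phi> r m" "r \<in> R" "i \<in> S r m"
  shows "\<phi> r m"
  using assms unfolding Bel_def Kn_def by auto

lemma Bel_CB_transfer:
  assumes "Bel R S i (CB R S \<phi>) r m" "r \<in> R" "i \<in> S r m" "l \<in> S r m"
  shows "Bel R S l (CB R S \<phi>) r m"
  using CB_EB Bel_self assms by metis

lemma Bel_CB_ex:
  assumes "Bel R S i (CB R S (ex_val E v)) r m" "r \<in> R" "i \<in> S r m"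
  shows "ex_val E v r m"
proof -
  have "CB R S (ex_val E v) r m" using Bel_self assms by metis
  then have "(EB R S ^^ 1) (ex_val E v) r m" unfolding CB_def by blast
  then have "Bel R S i (ex_val E v) r m" using assms(3) unfolding EB_def by simp
  then show ?thesis using Bel_self assms by metis
qed

lemma kbp_decide:
  assumes "kbp_action P \<Phi> i r m = Decide v"
  shows "\<Phi> i v r m \<and> (\<forall>w. \<Phi> i w r m \<longrightarrow> v \<le> w) \<and> \<not>(\<exists>m'<m. \<exists>v. P i (rloc r m' i) = Decide v)"
proof -
  have ne: "\<not>(\<exists>m'<m. \<exists>v. P i (rloc r m' i) = Decide v)"
    using assms unfolding kbp_action_def by (auto split: if_splits)
  then obtain u where u: "\<Phi> i u r m" "\<forall>w. \<Phi> i w r m \<longrightarrow> u \<le> w" and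
     d: "v = (LEAST v. \<Phi> i v r m)"
    using assms unfolding kbp_action_def by (auto split: if_splits)
  have "(LEAST v. \<Phi> i v r m) = u" using u by (intro Least_equality) auto
  then show ?thesis using u d ne by simp
qed

lemma kbp_nodecide:
  fixes \<Phi> :: "'agt \<Rightarrow> 'v::linorder \<Rightarrow> ('agt, 'e, 'l, 'm) fml"
  assumes "kbp_action P \<Phi> i r m = Noop" "\<Phi> i v r m" "finite {w. \<Phi> i w r m}"
  shows "\<exists>m'<m. \<exists>v. P i (rloc r m' i) = Decide v"
proof (rule ccontr)
  assume ne: "\<not> ?thesis"
  let ?A = "{w. \<Phi> i w r m}"
  have "Min ?A \<in> ?A" using assms by (intro Min_in) auto
  moreover have "\<forall>w. \<Phi> i w r m \<longrightarrow> Min ?A \<le> w" using assms(3) by auto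
  ultimately have "\<exists>v. \<Phi> i v r m \<and> (\<forall>w. \<Phi> i w r m \<longrightarrow> v \<le> w)" by blast
  then show False using assms(1) ne unfolding kbp_action_def by (auto split: if_splits)
qed

theorem proposition8:
  fixes P :: "('agt::finite, 'l, 'v::linorder) protocol"
    and E :: "('agt, 'l, 'm, 'v) info_exchange"
    and F :: "('agt, 'e, 'l, 'm, 'v) failure_model"
    and S :: "('agt, 'e, 'l, 'm) indexical"
    and botm :: 'm
  assumes "is_info_exchange botm E"
    and "is_failure_model E F"
    and "mono_decreasing (runs P E F) S"
    and "implements P (\<lambda>i v. Bel (runs P E F) S i (CB (runs P E F) S (ex_val E v))) E F"
  shows "SBA_valid P E F S"
proof -
  define R where "R = runs P E F"
  define \<Phi> where "\<Phi> = (\<lambda>i v. Bel R S i (CB R S (ex_val E v)))"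
  have imp: "\<And>r m i. r \<in> R \<Longrightarrow> P i (rloc r m i) = kbp_action P \<Phi> i r m"
    using assms(4) unfolding implements_def R_def \<Phi>_def by blast
  have mono: "\<And>r m m'. r \<in> R \<Longrightarrow> m' < m \<Longrightarrow> S r m \<subseteq> S r m'"
    using assms(3) unfolding mono_decreasing_def R_def by blast
  have fin: "\<And>r m i. r \<in> R \<Longrightarrow> i \<in> S r m \<Longrightarrow> finite {w. \<Phi> i w r m}"
  proof -
    fix r m i assume "r \<in> R" "i \<in> S r m"
    then have "{w. \<Phi> i w r m} \<subseteq> range (\<lambda>a. init E a (rloc r 0 a))"
      using Bel_CB_ex unfolding \<Phi>_def ex_val_def by fastforce
    then show "finite {w. \<Phi> i w r m}" by (rule finite_subset) simp
  qed
  have dec: "\<And>r m i v. r \<in> R \<Longrightarrow> P i (rloc r m i) = Decide v \<Longrightarrow>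
      \<Phi> i v r m \<and> (\<forall>w. \<Phi> i w r m \<longrightarrow> v \<le> w) \<and> \<not>(\<exists>m'<m. \<exists>v. P i (rloc r m' i) = Decide v)"
    using imp kbp_decide by metis
  have trans: "\<And>r m i l v. r \<in> R \<Longrightarrow> i \<in> S r m \<Longrightarrow> l \<in> S r m \<Longrightarrow> \<Phi> i v r m \<Longrightarrow> \<Phi> l v r m"
    unfolding \<Phi>_def using Bel_CB_transfer by metis
  have early: "\<And>r m i. r \<in> R \<Longrightarrow> i \<in> S r m \<Longrightarrow> \<Phi> i v r m \<Longrightarrow>
      \<exists>m'\<le>m. \<exists>v. P i (rloc r m' i) = Decide v" for v
  proof -
    fix r m i assume a: "r \<in> R" "i \<in> S r m" "\<Phi> i v r m"
    show "\<exists>m'\<le>m. \<exists>v. P i (rloc r m' i) = Decide v"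
    proof (cases "P i (rloc r m i)")
      case Noop
      then have "kbp_action P \<Phi> i r m = Noop" using imp a by metis
      then show ?thesis using kbp_nodecide[of P \<Phi> i r m v, OF _ a(3) fin[OF a(1,2)]] by (meson less_imp_le)
    next
      case (Decide x) then show ?thesis by blast
    qed
  qed
  show ?thesis
    unfolding SBA_valid_def R_def[symmetric]
  proof (intro ballI conjI allI impI)
    fix r i m m' v v'
    assume r: "r \<in> R" and h: "P i (rloc r m i) = Decide v \<and> P i (rloc r m' i) = Decide v'"
    show "m = m'"
    proof (rule ccontr)
      assume "m \<noteq> m'"
      then have "m < m' \<or> m' < m" by arith
      then show False using dec[OF r] h by blast
    qed
  next
    fix r i j m v
    assume r: "r \<in> R" and h: "i \<in> S r m \<and> j \<in> S r m \<and> P i (rloc r m i) = Decide v"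
    have di: "\<Phi> i v r m" "\<forall>w. \<Phi> i w r m \<longrightarrow> v \<le> w"
      "\<not>(\<exists>m'<m. \<exists>v. P i (rloc r m' i) = Decide v)" using dec[OF r] h by auto
    have nj: "\<not>(\<exists>m'<m. \<exists>v. P j (rloc r m' j) = Decide v)"
    proof
      assume "\<exists>m'<m. \<exists>v. P j (rloc r m' j) = Decide v"
      then obtain m' w where m': "m' < m" "P j (rloc r m' j) = Decide w" by blast
      have sub: "S r m \<subseteq> S r m'" using mono[OF r m'(1)] .
      have "\<Phi> j w r m'" using dec[OF r m'(2)] by blast
      then have "\<Phi> i w r m'" using trans[OF r] sub h by blast
      then obtain m'' where "m'' \<le> m'" "\<exists>v. P i (rloc r m'' i) = Decide v"
        using early[OF r] sub h by blast
      then show False using di(3) m'(1) by auto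
    qed
    have pj: "\<Phi> j v r m" using trans[OF r] h di(1) by blast
    have lj: "\<forall>w. \<Phi> j w r m \<longrightarrow> v \<le> w" using trans[OF r] h di(2) by blast
    have "(LEAST v. \<Phi> j v r m) = v" using pj lj by (intro Least_equality) auto
    then have "kbp_action P \<Phi> j r m = Decide v"
      unfolding kbp_action_def using nj pj lj by auto
    then show "P j (rloc r m j) = Decide v" using imp[OF r] by simp
  next
    fix r i m v
    assume r: "r \<in> R" and h: "i \<in> S r m \<and> P i (rloc r m i) = Decide v"
    then have "\<Phi> i v r m" using dec by blast
    then show "ex_val E v r m" using Bel_CB_ex r h unfolding \<Phi>_def by metis
  qed
qed

end
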